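(* For every integer $n>0$, $\mathrm{DE1}(n)+\mathrm{DE1}(n-1)$ equals the number of partitions of $n$ into parts none of which is divisible by $4$.
   Context: For a nonnegative integer $n$, $\mathrm{DE1}(n)$ denotes the number of partitions of $n$ in which no even part is repeated and the largest part is odd (so the empty partition is not counted and $\mathrm{DE1}(0)=0$). Equivalently, $\sum_{n\ge0}\mathrm{DE1}(n)q^n=\sum_{n\ge0}\frac{(-q^2;q^2)_n q^{2n+1}}{(q;q^2)_{n+1}}$, where $(a;q)_n=\prod_{j=0}^{n-1}(1-aq^j)$. *)

theory Defs
  imports Main "HOL-Library.Multiset"
begin

definition is_partition :: "nat multiset \<Rightarrow> nat \<Rightarrow> bool" where
  "is_partition p n \<longleftrightarrow> (\<forall>x\<in>#p. 0 < x) \<and> sum_mset p = n"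

definition DE1 :: "nat \<Rightarrow> nat" where
  "DE1 n = card {p. is_partition p n \<and> (\<forall>x\<in>#p. even x \<longrightarrow> count p x \<le> 1)
                  \<and> p \<noteq> {#} \<and> odd (Max_mset p)}"

definition no4 :: "nat \<Rightarrow> nat" where
  "no4 n = card {p. is_partition p n \<and> (\<forall>x\<in>#p. \<not> 4 dvd x)}"

end

theory Submission
  imports Defs
begin

function spl :: "nat \<Rightarrow> nat multiset" where
  "spl y = (if y = 0 \<or> odd y \<or> y mod 4 = 2 then {#y#} else spl (y div 2) + spl (y div 2))"
  by auto
termination by (relation "measure id") auto

declare spl.simps[simp del]

definition H :: "nat multiset \<Rightarrow> nat multiset" where
  "H q = \<Sum>\<^sub># (image_mset spl q)"

lemma H_empty[simp]: "H {#} = {#}" by (simp add: H_def)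
lemma H_add[simp]: "H (add_mset z q) = spl z + H q" by (simp add: H_def)
lemma H_plus: "H (a + b) = H a + H b" by (simp add: H_def)

lemma sum_spl: "sum_mset (spl y) = y"
proof (induction y rule: less_induct)
  case (less y)
  show ?case
  proof (cases "y = 0 \<or> odd y \<or> y mod 4 = 2")
    case True then show ?thesis by (subst spl.simps) simp
  next
    case False
    then have "y div 2 < y" by auto
    with less have "sum_mset (spl (y div 2)) = y div 2" by blast
    with False show ?thesis by (subst spl.simps) auto
  qed
qed

lemma spl_parts: "0 < y \<Longrightarrow> x \<in># spl y \<Longrightarrow> 0 < x \<and> \<not> 4 dvd x \<and> (odd x \<longleftrightarrow> odd y)"
proof (induction y rule: less_induct)
  case (less y)
  show ?case
  proof (cases "y = 0 \<or> odd y \<or> y mod 4 = 2")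
    case True
    then have "x = y" using less.prems by (subst (asm) spl.simps) auto
    then show ?thesis using True less.prems(1) by presburger
  next
    case False
    then have "y div 2 < y" "0 < y div 2" "even (y div 2)" using less.prems by presburger+
    moreover have "x \<in># spl (y div 2)" using less.prems False by (subst (asm) spl.simps) auto
    ultimately have "0 < x \<and> \<not> 4 dvd x \<and> (odd x \<longleftrightarrow> odd (y div 2))" using less.IH by blast
    then show ?thesis using False \<open>even (y div 2)\<close> by auto
  qed
qed

lemma spl_odd: "odd y \<Longrightarrow> spl y = {#y#}" by (subst spl.simps) auto

lemma spl_double: "0 < y \<Longrightarrow> even y \<Longrightarrow> spl (2*y) = spl y + spl y"
proof -
  assume "0 < y" "even y"
  then have "2*y mod 4 = 0" by presburger
  then show ?thesis using \<open>0 < y\<close> by (subst spl.simps) auto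
qed

lemma count_spl_pow: "x mod 4 = 2 \<Longrightarrow> count (spl (x * 2^i)) x = 2^i"
proof (induction i)
  case 0 then show ?case by (subst spl.simps) auto
next
  case (Suc i)
  have "x * 2^Suc i = 2 * (x * 2^i)" by simp
  moreover have "0 < x * 2^i" "even (x*2^i)" using Suc.prems by (auto, presburger+)
  ultimately show ?case using spl_double[of "x*2^i"] Suc by (simp only:) simp
qed

lemma count_spl_other: "x mod 4 = 2 \<Longrightarrow> 0 < y \<Longrightarrow> (\<forall>i. y \<noteq> x * 2^i) \<Longrightarrow> count (spl y) x = 0"
proof (induction y rule: less_induct)
  case (less y)
  show ?case
  proof (cases "y = 0 \<or> odd y \<or> y mod 4 = 2")
    case True
    have "y \<noteq> x" using less.prems(3)[rule_format, of 0] by simp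
    then show ?thesis using True by (subst spl.simps) auto
  next
    case False
    then have "y div 2 < y" "0 < y div 2" "even (y div 2)" and y2: "y = 2 * (y div 2)" using less.prems by presburger+
    have "\<forall>i. y div 2 \<noteq> x * 2^i"
    proof
      fix i show "y div 2 \<noteq> x * 2^i"
        using less.prems(3)[rule_format, of "Suc i"] y2 by auto
    qed
    then have "count (spl (y div 2)) x = 0" using less.IH[OF \<open>y div 2 < y\<close> less.prems(1) \<open>0 < y div 2\<close>] by blast
    then show ?thesis using False by (subst spl.simps) auto
  qed
qed

definition PDE :: "nat multiset \<Rightarrow> bool" where
  "PDE q \<longleftrightarrow> (\<forall>x\<in>#q. even x \<longrightarrow> count q x \<le> 1)"

lemma PDE_sub: "PDE (add_mset z q) \<Longrightarrow> PDE q"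
  unfolding PDE_def
proof (intro ballI impI)
  fix x assume a: "\<forall>x\<in>#add_mset z q. even x \<longrightarrow> count (add_mset z q) x \<le> 1" "x \<in># q" "even x"
  then have "count (add_mset z q) x \<le> 1" by auto
  then show "count q x \<le> 1" by (simp split: if_splits)
qed

lemma count_H_odd: "odd x \<Longrightarrow> 0 \<notin># q \<Longrightarrow> count (H q) x = count q x"
proof (induction q)
  case empty then show ?case by simp
next
  case (add z q)
  have "count (spl z) x = (if z = x then 1 else 0)"
  proof (cases "odd z")
    case True then show ?thesis by (simp add: spl_odd)
  next
    case False
    have "x \<notin># spl z" using spl_parts[of z x] False add.prems by auto
    then show ?thesis using False add.prems by (auto simp: not_in_iff)
  qed
  then show ?case using add by auto
qed

lemma count_H_2: "PDE q \<Longrightarrow> 0 \<notin># q \<Longrightarrow> x mod 4 = 2 \<Longrightarrow>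
   count (H q) x = (\<Sum>i\<in>{i. x*2^i \<in># q}. 2^i)"
proof (induction q)
  case empty then show ?case by simp
next
  case (add z q)
  have x0: "0 < x" using add.prems by (auto intro!: Nat.gr0I)
  have fin: "finite {i. x*2^i \<in># q}"
  proof -
    have "{i. x*2^i \<in># q} = (\<lambda>i. x*2^i) -` set_mset q" by auto
    moreover have "inj (\<lambda>i::nat. x*2^i)" using x0 by (auto simp: inj_on_def)
    ultimately show ?thesis by (simp add: finite_vimageI)
  qed
  have IH: "count (H q) x = (\<Sum>i\<in>{i. x*2^i \<in># q}. 2^i)"
    using add.IH PDE_sub[OF add.prems(1)] add.prems by auto
  show ?case
  proof (cases "\<exists>i. z = x * 2^i")
    case True
    then obtain i where zi: "z = x*2^i" by blast
    have "even z" using zi add.prems(3) by (simp, presburger)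
    then have "count (add_mset z q) z \<le> 1" using add.prems(1) unfolding PDE_def by auto
    then have "z \<notin># q" by (simp add: count_eq_zero_iff)
    then have ni: "i \<notin> {i. x*2^i \<in># q}" using zi by auto
    have "{i. x*2^i \<in># add_mset z q} = insert i {i. x*2^i \<in># q}"
      using zi x0 by auto
    then show ?thesis using IH ni fin count_spl_pow[OF add.prems(3), of i] zi by simp
  next
    case False
    have "count (spl z) x = 0" using count_spl_other[OF add.prems(3), of z] False add.prems(2)
      by (auto intro!: Nat.gr0I)
    moreover have "{i. x*2^i \<in># add_mset z q} = {i. x*2^i \<in># q}" using False by auto
    ultimately show ?thesis using IH by simp
  qed
qed

lemma binsum_split: "finite S \<Longrightarrow> (\<Sum>i\<in>S. (2::nat)^i) = (if 0 \<in> S then 1 else 0) + 2 * (\<Sum>i\<in>Suc -` S. 2^i)"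
proof -
  assume fS: "finite S"
  have fS': "finite (Suc -` S)" using fS by (simp add: finite_vimageI)
  have S: "S = (S \<inter> {0}) \<union> Suc ` (Suc -` S)"
  proof (rule set_eqI)
    fix x show "x \<in> S \<longleftrightarrow> x \<in> (S \<inter> {0}) \<union> Suc ` (Suc -` S)"
      by (cases x) auto
  qed
  have d: "(S \<inter> {0}) \<inter> Suc ` (Suc -` S) = {}" by auto
  have "(\<Sum>i\<in>S. (2::nat)^i) = (\<Sum>i\<in>(S \<inter> {0}) \<union> Suc ` (Suc -` S). 2^i)"
    by (rule arg_cong[OF S])
  also have "\<dots> = (\<Sum>i\<in>S \<inter> {0}. 2^i) + (\<Sum>i\<in>Suc ` (Suc -` S). 2^i)"
    by (rule sum.union_disjoint) (use fS fS' d in auto)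
  also have "(\<Sum>i\<in>Suc ` (Suc -` S). (2::nat)^i) = (\<Sum>i\<in>Suc -` S. 2^Suc i)"
    by (subst sum.reindex) auto
  also have "\<dots> = 2 * (\<Sum>i\<in>Suc -` S. 2^i)" by (simp add: sum_distrib_left)
  finally show ?thesis by auto
qed

lemma binsum_inj: "finite S \<Longrightarrow> finite T \<Longrightarrow> (\<Sum>i\<in>S. (2::nat)^i) = (\<Sum>i\<in>T. 2^i) \<Longrightarrow> S = T"
proof (induction "\<Sum>i\<in>S. (2::nat)^i" arbitrary: S T rule: less_induct)
  case less
  show ?case
  proof (cases "(\<Sum>i\<in>S. (2::nat)^i) = 0")
    case True
    then show ?thesis using less.prems by simp
  next
    case False
    note sS = binsum_split[OF less.prems(1)] and sT = binsum_split[OF less.prems(2)]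
    have pS: "odd (\<Sum>i\<in>S. (2::nat)^i) \<longleftrightarrow> 0 \<in> S" by (subst sS) auto
    have pT: "odd (\<Sum>i\<in>T. (2::nat)^i) \<longleftrightarrow> 0 \<in> T" by (subst sT) auto
    have z: "0 \<in> S \<longleftrightarrow> 0 \<in> T" using pS pT less.prems(3) by simp
    then have e: "(\<Sum>i\<in>Suc -` S. (2::nat)^i) = (\<Sum>i\<in>Suc -` T. 2^i)" using sS sT less.prems(3) by auto
    have "(\<Sum>i\<in>Suc -` S. (2::nat)^i) < (\<Sum>i\<in>S. 2^i)" using sS False by auto
    then have "Suc -` S = Suc -` T" using less.hyps[OF _ _ _ e] less.prems by (simp add: finite_vimageI)
    show "S = T"
    proof (rule set_eqI)
      fix x show "x \<in> S \<longleftrightarrow> x \<in> T"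
        using z \<open>Suc -` S = Suc -` T\<close> by (cases x) (auto simp: set_eq_iff)
    qed
  qed
qed

lemma carry: "PDE q0 \<Longrightarrow> 0 \<notin># q0 \<Longrightarrow> 0 < y \<Longrightarrow> even y \<Longrightarrow>
   \<exists>q. PDE q \<and> 0 \<notin># q \<and> H q = H q0 + spl y"
proof (induction "size q0" arbitrary: q0 y rule: less_induct)
  case less
  show ?case
  proof (cases "y \<in># q0")
    case False
    have "PDE (add_mset y q0)" using less.prems(1) False unfolding PDE_def
      by (auto simp: not_in_iff)
    then show ?thesis using less.prems False by (intro exI[of _ "add_mset y q0"]) (auto simp: add.commute)
  next
    case True
    define q1 where "q1 = q0 - {#y#}"
    have q0: "q0 = add_mset y q1" using True q1_def by simp
    have "PDE q1" "0 \<notin># q1" using less.prems q0 PDE_sub by auto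
    moreover have "size q1 < size q0" using q0 by simp
    ultimately obtain q where "PDE q" "0 \<notin># q" "H q = H q1 + spl (2*y)"
      using less.hyps[of q1 "2*y"] less.prems by auto
    moreover have "H q1 + spl (2*y) = H q0 + spl y"
      using spl_double[OF less.prems(3,4)] q0 by (simp add: add_ac)
    ultimately show ?thesis by auto
  qed
qed

lemma surj_H: "\<forall>x\<in>#p. 0 < x \<and> \<not> 4 dvd x \<Longrightarrow> \<exists>q. PDE q \<and> 0 \<notin># q \<and> H q = p"
proof (induction p)
  case empty then show ?case by (intro exI[of _ "{#}"]) (auto simp: PDE_def)
next
  case (add x p)
  then obtain q where q: "PDE q" "0 \<notin># q" "H q = p" by auto
  show ?case
  proof (cases "odd x")
    case True
    have "PDE (add_mset x q)" using q(1) True unfolding PDE_def by auto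
    then show ?thesis using q True add.prems by (intro exI[of _ "add_mset x q"]) (auto simp: spl_odd)
  next
    case False
    have x0: "0 < x" "\<not> 4 dvd x" using add.prems by auto
    then have "x mod 4 = 2" using False by presburger
    then have sx: "spl x = {#x#}" by (subst spl.simps) auto
    obtain q' where "PDE q'" "0 \<notin># q'" "H q' = H q + spl x" using carry[OF q(1,2) x0(1)] False by auto
    then show ?thesis using sx q by auto
  qed
qed

lemma sum_H: "sum_mset (H q) = sum_mset q"
  by (induction q) (auto simp: sum_spl)

lemma H_parts: "0 \<notin># q \<Longrightarrow> x \<in># H q \<Longrightarrow> 0 < x \<and> \<not> 4 dvd x"
proof (induction q)
  case empty then show ?case by simp
next
  case (add z q)
  then show ?case using spl_parts[of z x] by (auto intro!: Nat.gr0I)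
qed

lemma cnt01: "count q y \<le> 1 \<Longrightarrow> count q y = (if y \<in># q then 1 else 0)"
proof (cases "y \<in># q")
  case True
  then have "0 < count q y" by simp
  moreover assume "count q y \<le> 1"
  ultimately have "count q y = 1" by linarith
  then show ?thesis using True by simp
next
  case False then show ?thesis by (simp add: not_in_iff)
qed
lemma dec: "0 < y \<Longrightarrow> even y \<Longrightarrow> \<exists>x i. x mod 4 = 2 \<and> y = x * 2^i" for y :: nat
  proof (induction y rule: less_induct)
    case (less y)
    show ?case
    proof (cases "y mod 4 = 2")
      case True then show ?thesis by (intro exI[of _ y] exI[of _ 0]) auto
    next
      case False
      then have "y div 2 < y" "0 < y div 2" "even (y div 2)" and y2: "y = 2 * (y div 2)" using less.prems by presburger+
      then obtain x i where "x mod 4 = 2" "y div 2 = x * 2^i" using less.IH by blast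
      then show ?thesis using y2 by (intro exI[of _ x] exI[of _ "Suc i"]) auto
    qed
  qed

lemma PDE_count: "PDE q \<Longrightarrow> even y \<Longrightarrow> count q y \<le> 1"
proof (cases "y \<in># q")
  case True
  moreover assume "PDE q" "even y"
  ultimately show ?thesis unfolding PDE_def by blast
next
  case False then show ?thesis by (simp add: not_in_iff)
qed

lemma inj_H: "PDE q1 \<Longrightarrow> 0 \<notin># q1 \<Longrightarrow> PDE q2 \<Longrightarrow> 0 \<notin># q2 \<Longrightarrow> H q1 = H q2 \<Longrightarrow> q1 = q2"
proof -
  assume a: "PDE q1" "0 \<notin># q1" "PDE q2" "0 \<notin># q2" "H q1 = H q2"
  have fin: "finite {i. x*2^i \<in># q}" if "0 < x" for x :: nat and q
  proof -
    have "{i. x*2^i \<in># q} = (\<lambda>i. x*2^i) -` set_mset q" by auto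
    moreover have "inj (\<lambda>i::nat. x*2^i)" using that by (auto simp: inj_on_def)
    ultimately show ?thesis by (simp add: finite_vimageI)
  qed
  show "q1 = q2"
  proof (rule multiset_eqI)
    fix y
    show "count q1 y = count q2 y"
    proof (cases "odd y")
      case True then show ?thesis using count_H_odd[of y q1] count_H_odd[of y q2] a by simp
    next
      case False
      show ?thesis
      proof (cases "y = 0")
        case True then show ?thesis using a by (simp add: not_in_iff)
      next
        case False': False
        then obtain x i where x: "x mod 4 = 2" "y = x * 2^i" using dec[of y] False False' by auto
        then have x0: "0 < x" by (auto intro!: Nat.gr0I)
        have "count (H q1) x = count (H q2) x" using a(5) by simp
        then have "(\<Sum>i\<in>{i. x*2^i \<in># q1}. (2::nat)^i) = (\<Sum>i\<in>{i. x*2^i \<in># q2}. 2^i)"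
          using count_H_2[OF a(1,2) x(1)] count_H_2[OF a(3,4) x(1)] by simp
        then have "{i. x*2^i \<in># q1} = {i. x*2^i \<in># q2}"
          by (rule binsum_inj[OF fin[OF x0] fin[OF x0]])
        moreover have "y \<in># q1 \<longleftrightarrow> i \<in> {i. x*2^i \<in># q1}" "y \<in># q2 \<longleftrightarrow> i \<in> {i. x*2^i \<in># q2}"
          using x(2) by simp_all
        ultimately have "y \<in># q1 \<longleftrightarrow> y \<in># q2" by simp
        moreover have "count q1 y \<le> 1" "count q2 y \<le> 1" using PDE_count[OF a(1)] PDE_count[OF a(3)] False
          by blast+
        ultimately show ?thesis using cnt01[of q1 y] cnt01[of q2 y] by simp
      qed
    qed
  qed
qed

lemma size_le_sum: "\<forall>x\<in>#p. 0 < x \<Longrightarrow> size p \<le> sum_mset (p::nat multiset)"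
  by (induction p) auto

lemma mem_le_sum: "x \<in># p \<Longrightarrow> x \<le> sum_mset (p::nat multiset)"
  by (induction p) auto

lemma fin_part: "finite {p. is_partition p n}"
proof (rule finite_subset)
  show "{p. is_partition p n} \<subseteq> (\<Union>k\<in>{..n}. multisets_of_size {1..n} k)"
  proof
    fix p assume "p \<in> {p. is_partition p n}"
    then have a: "\<forall>x\<in>#p. 0 < x" "sum_mset p = n" by (auto simp: is_partition_def)
    then have "size p \<le> n" using size_le_sum by metis
    moreover have "set_mset p \<subseteq> {1..n}" using a mem_le_sum by fastforce
    ultimately show "p \<in> (\<Union>k\<in>{..n}. multisets_of_size {1..n} k)" by (auto simp: multisets_of_size_def)
  qed
  show "finite (\<Union>k\<in>{..n}. multisets_of_size {1..n} k)" by auto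
qed

lemma step1: "card {p. is_partition p n \<and> PDE p} = no4 n"
proof -
  let ?A = "{p. is_partition p n \<and> PDE p}" and ?B = "{p. is_partition p n \<and> (\<forall>x\<in>#p. \<not> 4 dvd x)}"
  have "bij_betw H ?A ?B"
  proof (rule bij_betw_imageI)
    show "inj_on H ?A"
      by (rule inj_onI) (rule inj_H, auto simp: is_partition_def)
    show "H ` ?A = ?B"
    proof
      show "H ` ?A \<subseteq> ?B"
      proof
        fix p assume "p \<in> H ` ?A"
        then obtain q where q: "q \<in> ?A" "p = H q" by auto
        then have "0 \<notin># q" by (auto simp: is_partition_def)
        then show "p \<in> ?B" using q H_parts[of q] sum_H[of q] by (auto simp: is_partition_def)
      qed
      show "?B \<subseteq> H ` ?A"
      proof
        fix p assume p: "p \<in> ?B"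
        then obtain q where q: "PDE q" "0 \<notin># q" "H q = p" using surj_H[of p] by (auto simp: is_partition_def)
        then have "q \<in> ?A" using p sum_H[of q] by (auto simp: is_partition_def intro!: Nat.gr0I)
        then show "p \<in> H ` ?A" using q by auto
      qed
    qed
  qed
  then show ?thesis unfolding no4_def by (rule bij_betw_same_card)
qed

lemma Max_add: "\<forall>x\<in>#r. x \<le> a \<Longrightarrow> Max_mset (add_mset a (r::nat multiset)) = a"
  by (rule Max_eqI) auto

definition fE :: "nat multiset \<Rightarrow> nat multiset" where
  "fE p = add_mset (Max_mset p - 1) (p - {#Max_mset p#})"
definition gD :: "nat multiset \<Rightarrow> nat multiset" where
  "gD r = add_mset (Max_mset r + 1) (r - {#Max_mset r#})"

lemma step3: assumes "0 < n"
  shows "card {p. is_partition p n \<and> PDE p \<and> p \<noteq> {#} \<and> even (Max_mset p)}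
       = card {p. is_partition p (n - 1) \<and> PDE p \<and> p \<noteq> {#} \<and> odd (Max_mset p)}"
proof -
  let ?E = "{p. is_partition p n \<and> PDE p \<and> p \<noteq> {#} \<and> even (Max_mset p)}"
  let ?D = "{p. is_partition p (n - 1) \<and> PDE p \<and> p \<noteq> {#} \<and> odd (Max_mset p)}"
  have A: "gD (fE p) = p \<and> fE p \<in> ?D" if p: "p \<in> ?E" for p
  proof -
    define M where "M = Max_mset p"
    define r0 where "r0 = p - {#M#}"
    have M: "M \<in># p" using p M_def by auto
    have pp: "p = add_mset M r0" using M r0_def by simp
    have "M > 0" using p M by (auto simp: is_partition_def)
    moreover have "even M" using p M_def by auto
    ultimately have M2: "M \<ge> 2" by presburger
    have "count p M \<le> 1" using p M \<open>even M\<close> by (auto simp: PDE_def)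
    then have nM: "M \<notin># r0" using pp by (simp add: not_in_iff)
    have le: "\<forall>x\<in>#r0. x \<le> M - 1"
    proof
      fix x assume x: "x \<in># r0"
      then have "x \<in># p" using pp by simp
      then have "x \<le> M" using M_def by auto
      moreover have "x \<noteq> M" using x nM by auto
      ultimately show "x \<le> M - 1" by simp
    qed
    have fp: "fE p = add_mset (M - 1) r0" unfolding fE_def M_def[symmetric] r0_def ..
    have mf: "Max_mset (fE p) = M - 1" using fp le Max_add by simp
    have "gD (fE p) = p" unfolding gD_def mf using fp M2 pp by simp
    moreover have "fE p \<in> ?D"
    proof -
      have "is_partition (fE p) (n - 1)" using p fp pp M2 by (auto simp: is_partition_def)
      moreover have "PDE (fE p)"
        unfolding PDE_def
      proof (intro ballI impI)
        fix x assume x: "x \<in># fE p" "even x"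
        then have "x \<noteq> M - 1" using M2 \<open>even M\<close> by presburger
        then have "count (fE p) x = count r0 x" using fp by simp
        also have "\<dots> \<le> count p x" using pp by simp
        also have "\<dots> \<le> 1" using p x \<open>x \<noteq> M - 1\<close> fp pp by (auto simp: PDE_def)
        finally show "count (fE p) x \<le> 1" .
      qed
      moreover have "odd (M - 1)" using M2 \<open>even M\<close> by presburger
      ultimately show ?thesis using mf fp by auto
    qed
    ultimately show ?thesis by blast
  qed
  have B: "fE (gD r) = r \<and> gD r \<in> ?E" if r: "r \<in> ?D" for r
  proof -
    define M where "M = Max_mset r"
    define r0 where "r0 = r - {#M#}"
    have M: "M \<in># r" using r M_def by auto
    have rr: "r = add_mset M r0" using M r0_def by simp
    have oM: "odd M" using r M_def by auto
    have le: "\<forall>x\<in>#r0. x \<le> M"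
    proof
      fix x assume "x \<in># r0"
      then have "x \<in># r" using rr by simp
      then show "x \<le> M" using M_def by auto
    qed
    have le': "\<forall>x\<in>#r0. x \<le> M + 1" using le by auto
    have gr: "gD r = add_mset (M + 1) r0" unfolding gD_def M_def[symmetric] r0_def ..
    have mg: "Max_mset (gD r) = M + 1" using gr le' Max_add by simp
    have "fE (gD r) = r" unfolding fE_def mg using gr rr by simp
    moreover have "gD r \<in> ?E"
    proof -
      have "sum_mset r = n - 1" using r by (auto simp: is_partition_def)
      then have "is_partition (gD r) n" using r gr rr assms by (auto simp: is_partition_def)
      moreover have "M + 1 \<notin># r0" using le by fastforce
      moreover have "PDE (gD r)"
        unfolding PDE_def
      proof (intro ballI impI)
        fix x assume x: "x \<in># gD r" "even x"
        show "count (gD r) x \<le> 1"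
        proof (cases "x = M + 1")
          case True then show ?thesis using gr \<open>M + 1 \<notin># r0\<close> by (simp add: not_in_iff)
        next
          case False
          then have "x \<in># r0" using x gr by auto
          then have "x \<in># r" using rr by simp
          moreover have "x \<noteq> M" using oM x by auto
          ultimately have "count r x \<le> 1" using r x by (auto simp: PDE_def)
          then show ?thesis using gr rr False \<open>x \<noteq> M\<close> by simp
        qed
      qed
      ultimately show ?thesis using mg gr oM by auto
    qed
    ultimately show ?thesis by blast
  qed
  have "bij_betw fE ?E ?D"
    by (rule bij_betw_byWitness[of _ gD]) (use A B in auto)
  then show ?thesis by (rule bij_betw_same_card)
qed

theorem corollary1:
  fixes n :: nat
  assumes "n > 0"
  shows "DE1 n + DE1 (n - 1) = no4 n"
proof -
  let ?A = "{p. is_partition p n \<and> PDE p}"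
  let ?D = "{p. is_partition p n \<and> PDE p \<and> p \<noteq> {#} \<and> odd (Max_mset p)}"
  let ?E = "{p. is_partition p n \<and> PDE p \<and> p \<noteq> {#} \<and> even (Max_mset p)}"
  have d: "DE1 m = card {p. is_partition p m \<and> PDE p \<and> p \<noteq> {#} \<and> odd (Max_mset p)}" for m
    unfolding DE1_def PDE_def ..
  have "?A = ?D \<union> ?E" using assms by (auto simp: is_partition_def)
  moreover have "finite ?D" "finite ?E" by (auto intro: finite_subset[OF _ fin_part[of n]])
  ultimately have "card ?A = card ?D + card ?E" by (simp add: card_Un_disjoint disjoint_iff)
  then show ?thesis using step1[of n] step3[OF assms] d[of n] d[of "n-1"] by simp
qed

end
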